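(* Let $R\in\{\mathrm{ML},\mathrm{wML},\mathrm{C},\mathrm{S}\}$, let $\varphi$ be a precise forecasting system and let $[p,q]\in\mathscr I$ with $p<q$. If $\Omega_R(\varphi)=\Omega_R([p,q])$, then $\varphi$ is non-computable and non-stationary.
   Context: Notation: $\mathbb N=\{1,2,\dots\}$, $\mathbb N_0=\mathbb N\cup\{0\}$. $\Omega=\{0,1\}^{\mathbb N}$ is the set of paths $\omega=(\omega_1,\omega_2,\dots)$; $\omega_{1:n}=(\omega_1,\dots,\omega_n)$, $\omega_{1:0}=\square$. $\mathbb S=\bigcup_{n\in\mathbb N_0}\{0,1\}^n$ is the set of situations, $|s|$ the length, $sx$ concatenation. $\mathscr I$ is the set of closed intervals $I\subseteq[0,1]$. For $r\in[0,1]$ and $f:\{0,1\}\to\mathbb R$, $E_r(f)=rf(1)+(1-r)f(0)$; $\overline E_I(f)=\max_{r\in I}E_r(f)$. A forecasting system is a map $\varphi:\mathbb S\to\mathscr I$; $\underline\varphi(s)=\min\varphi(s)$, $\overline\varphi(s)=\max\varphi(s)$; it is precise if every $\varphi(s)$ is a singleton, stationary if constant (then identified with its value $I$). A real process is $F:\mathbb S\to\mathbb R$; $\Delta F(s)$ is $x\mapsto F(sx)-F(s)$. $M$ is a supermartingale for $\varphi$ if $\overline E_{\varphi(s)}(\Delta M(s))\le0$ for all $s$. A test process is a non-negative real process with $F(\square)=1$; a test supermartingale for $\varphi$ is a test process that is a supermartingale for $\varphi$. A multiplier process $D$ assigns to each $s$ a function $D(s):\{0,1\}\to[0,\infty)$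 and generates the test process $F(\square)=1$, $F(sx)=F(s)D(s)(x)$. Computability: maps from countable effectively encoded domains to $\mathbb N_0$ or $\mathbb Q$ are recursive if Turing-computable; a real map $r$ on a domain $\mathscr D$ is lower semicomputable if $r(d)=\lim_nq(d,n)$ for a recursive rational $q$ non-decreasing in $n$, computable if $|r(d)-q(d,n)|<2^{-n}$ for some recursive rational $q$. A forecasting system is computable if $\underline\varphi$ and $\overline\varphi$ are computable real maps on $\mathbb S$. $\mathscr F_{\mathrm{ML}}$: lower semicomputable test processes; $\mathscr F_{\mathrm{wML}}$: test processes generated by lower semicomputable multiplier processes; $\mathscr F_{\mathrm C}=\mathscr F_{\mathrm S}$: positive rational-valued recursive test processes. $\overline{\mathbb T}_R(\varphi)$: elements of $\mathscr F_R$ that are test supermartingales for $\varphi$. For $R\in\{\mathrm{ML},\mathrm{wML},\mathrm C\}$, $\omega$ is $R$-random for $\varphi$ if no $T\in\overline{\mathbb T}_R(\varphi)$ has $\limsup_nT(\omega_{1:n})=\infty$. A real growth function is a computable, non-decreasing, unbounded $\tau:\mathbb N_0\to[0,\infty)$; $\omega$ is S-random for $\varphi$ if there are no $T\in\overline{\mathbb T}_{\mathrm S}(\varphi)$ and real growth function $\tau$ with $\limsup_n[T(\omega_{1:n})-\tau(n)]\ge0$. $\Omega_R(\varphi)$ is the set of paths that are $R$-random for $\varphi$; for an interval $I$, $\Omega_R(I)$ refers to the stationary forecasting system with value $I$. *)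

theory Defs
  imports Complex_Main "HOL-Library.Nat_Bijection" "HOL-Library.Liminf_Limsup" "HOL-Library.Extended_Real"
begin

inductive recfn :: "nat \<Rightarrow> (nat list \<Rightarrow> nat) \<Rightarrow> bool" where
  rf_zero: "recfn n (\<lambda>_. 0)"
| rf_succ: "recfn 1 (\<lambda>xs. Suc (hd xs))"
| rf_proj: "i < n \<Longrightarrow> recfn n (\<lambda>xs. xs ! i)"
| rf_comp: "recfn m f \<Longrightarrow> length gs = m \<Longrightarrow> (\<forall>g\<in>set gs. recfn n g) \<Longrightarrow>
            recfn n (\<lambda>xs. f (map (\<lambda>g. g xs) gs))"
| rf_prim: "recfn n f \<Longrightarrow> recfn (Suc (Suc n)) g \<Longrightarrow>
            recfn (Suc n) (\<lambda>xs. rec_nat (f (tl xs)) (\<lambda>k r. g (k # r # tl xs)) (hd xs))"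
| rf_mu: "recfn (Suc n) g \<Longrightarrow> (\<forall>xs. length xs = n \<longrightarrow> (\<exists>y. g (y # xs) = 0)) \<Longrightarrow>
          recfn n (\<lambda>xs. LEAST y. g (y # xs) = 0)"

definition rat_code :: "nat \<Rightarrow> nat \<Rightarrow> nat \<Rightarrow> real" where
  "rat_code a b c = (real a - real b) / (real c + 1)"

type_synonym situation = "bool list"
type_synonym path = "nat \<Rightarrow> bool"

text \<open>omega_{1:n}; path component omega_k is omega (k-1).\<close>
definition prefix :: "path \<Rightarrow> nat \<Rightarrow> situation" where
  "prefix \<omega> n = map \<omega> [0..<n]"

definition enc_sit :: "situation \<Rightarrow> nat" where
  "enc_sit s = foldl (\<lambda>n b. 2 * n + (if b then 1 else 0)) 1 s"

definition enc_sit_bool :: "situation \<times> bool \<Rightarrow> nat" where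
  "enc_sit_bool p = prod_encode (enc_sit (fst p), (if snd p then 1 else 0))"

definition recursive_rat2 :: "('d \<Rightarrow> nat) \<Rightarrow> ('d \<Rightarrow> nat \<Rightarrow> real) \<Rightarrow> bool" where
  "recursive_rat2 enc q \<longleftrightarrow> (\<exists>a b c. recfn 2 a \<and> recfn 2 b \<and> recfn 2 c \<and>
      (\<forall>d n. q d n = rat_code (a [enc d, n]) (b [enc d, n]) (c [enc d, n])))"

definition recursive_rat :: "('d \<Rightarrow> nat) \<Rightarrow> ('d \<Rightarrow> real) \<Rightarrow> bool" where
  "recursive_rat enc q \<longleftrightarrow> (\<exists>a b c. recfn 1 a \<and> recfn 1 b \<and> recfn 1 c \<and>
      (\<forall>d. q d = rat_code (a [enc d]) (b [enc d]) (c [enc d])))"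

definition lower_semicomputable :: "('d \<Rightarrow> nat) \<Rightarrow> ('d \<Rightarrow> real) \<Rightarrow> bool" where
  "lower_semicomputable enc r \<longleftrightarrow> (\<exists>q. recursive_rat2 enc q \<and>
      (\<forall>d. mono (q d) \<and> (q d \<longlonglongrightarrow> r d)))"

definition computable_real :: "('d \<Rightarrow> nat) \<Rightarrow> ('d \<Rightarrow> real) \<Rightarrow> bool" where
  "computable_real enc r \<longleftrightarrow> (\<exists>q. recursive_rat2 enc q \<and>
      (\<forall>d n. \<bar>r d - q d n\<bar> < 2 powr (- real n)))"

type_synonym fsys = "situation \<Rightarrow> real set"

definition forecasting_system :: "fsys \<Rightarrow> bool" where
  "forecasting_system \<phi> \<longleftrightarrow> (\<forall>s. \<exists>a b. 0 \<le> a \<and> a \<le> b \<and> b \<le> 1 \<and> \<phi> s = {a..b})"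

definition lower_fs :: "fsys \<Rightarrow> situation \<Rightarrow> real" where
  "lower_fs \<phi> s = Inf (\<phi> s)"

definition upper_fs :: "fsys \<Rightarrow> situation \<Rightarrow> real" where
  "upper_fs \<phi> s = Sup (\<phi> s)"

definition precise :: "fsys \<Rightarrow> bool" where
  "precise \<phi> \<longleftrightarrow> (\<forall>s. \<exists>r. \<phi> s = {r})"

definition stationary :: "fsys \<Rightarrow> bool" where
  "stationary \<phi> \<longleftrightarrow> (\<exists>I. \<forall>s. \<phi> s = I)"

definition computable_fs :: "fsys \<Rightarrow> bool" where
  "computable_fs \<phi> \<longleftrightarrow> computable_real enc_sit (lower_fs \<phi>) \<and> computable_real enc_sit (upper_fs \<phi>)"

definition E_r :: "real \<Rightarrow> (bool \<Rightarrow> real) \<Rightarrow> real" where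
  "E_r r f = r * f True + (1 - r) * f False"

definition upper_E :: "real set \<Rightarrow> (bool \<Rightarrow> real) \<Rightarrow> real" where
  "upper_E I f = (SUP r\<in>I. E_r r f)"

definition supermartingale :: "fsys \<Rightarrow> (situation \<Rightarrow> real) \<Rightarrow> bool" where
  "supermartingale \<phi> M \<longleftrightarrow> (\<forall>s. upper_E (\<phi> s) (\<lambda>x. M (s @ [x]) - M s) \<le> 0)"

definition test_process :: "(situation \<Rightarrow> real) \<Rightarrow> bool" where
  "test_process F \<longleftrightarrow> (\<forall>s. 0 \<le> F s) \<and> F [] = 1"

definition generated :: "(situation \<Rightarrow> bool \<Rightarrow> real) \<Rightarrow> situation \<Rightarrow> real" where
  "generated D s = (\<Prod>i<length s. D (take i s) (s ! i))"

datatype rnotion = R_ML | R_wML | R_C | R_S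

definition F_class :: "rnotion \<Rightarrow> (situation \<Rightarrow> real) set" where
  "F_class R = (case R of
      R_ML \<Rightarrow> {F. test_process F \<and> lower_semicomputable enc_sit F}
    | R_wML \<Rightarrow> {F. \<exists>D. (\<forall>s x. 0 \<le> D s x) \<and>
                    lower_semicomputable enc_sit_bool (\<lambda>p. D (fst p) (snd p)) \<and> F = generated D}
    | R_C \<Rightarrow> {F. test_process F \<and> (\<forall>s. 0 < F s) \<and> recursive_rat enc_sit F}
    | R_S \<Rightarrow> {F. test_process F \<and> (\<forall>s. 0 < F s) \<and> recursive_rat enc_sit F})"

definition test_supermartingales :: "rnotion \<Rightarrow> fsys \<Rightarrow> (situation \<Rightarrow> real) set" where
  "test_supermartingales R \<phi> = {T \<in> F_class R. test_process T \<and> supermartingale \<phi> T}"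

definition real_growth_function :: "(nat \<Rightarrow> real) \<Rightarrow> bool" where
  "real_growth_function \<tau> \<longleftrightarrow> computable_real id \<tau> \<and> mono \<tau> \<and> (\<forall>n. 0 \<le> \<tau> n) \<and>
      \<not> bdd_above (range \<tau>)"

definition random :: "rnotion \<Rightarrow> fsys \<Rightarrow> path \<Rightarrow> bool" where
  "random R \<phi> \<omega> = (if R = R_S then
      \<not> (\<exists>T \<in> test_supermartingales R_S \<phi>. \<exists>\<tau>. real_growth_function \<tau> \<and>
            limsup (\<lambda>n. ereal (T (prefix \<omega> n) - \<tau> n)) \<ge> 0)
    else
      \<not> (\<exists>T \<in> test_supermartingales R \<phi>. limsup (\<lambda>n. ereal (T (prefix \<omega> n))) = \<infinity>))"

definition Omega_R :: "rnotion \<Rightarrow> fsys \<Rightarrow> path set" where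
  "Omega_R R \<phi> = {\<omega>. random R \<phi> \<omega>}"

end

theory Submission
  imports Defs "HOL-Library.Countable" "HOL-Library.Countable_Set"
begin

datatype rcode = Z | Sc | Pj nat | Cp rcode "rcode list" | Pr rcode rcode | Mu rcode
instance rcode :: countable by countable_datatype
fun sem :: "rcode \<Rightarrow> nat list \<Rightarrow> nat" where
  "sem Z = (\<lambda>_. 0)"
| "sem Sc = (\<lambda>xs. Suc (hd xs))"
| "sem (Pj i) = (\<lambda>xs. xs ! i)"
| "sem (Cp f gs) = (\<lambda>xs. sem f (map (\<lambda>g. sem g xs) gs))"
| "sem (Pr f g) = (\<lambda>xs. rec_nat (sem f (tl xs)) (\<lambda>k r. sem g (k # r # tl xs)) (hd xs))"
| "sem (Mu g) = (\<lambda>xs. LEAST y. sem g (y # xs) = 0)"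
lemma recfn_sem: "recfn n f \<Longrightarrow> \<exists>c. f = sem c"
proof (induction rule: recfn.induct)
  case (rf_zero n) then show ?case by (metis sem.simps(1))
next
  case rf_succ then show ?case by (metis sem.simps(2))
next
  case (rf_proj i n) then show ?case by (metis sem.simps(3))
next
  case (rf_comp m f gs n)
  obtain cf where cf: "f = sem cf" using rf_comp by blast
  have "\<forall>g\<in>set gs. \<exists>c. g = sem c" using rf_comp by blast
  then obtain cd where cd: "\<forall>g\<in>set gs. g = sem (cd g)" by metis
  have "(\<lambda>xs. f (map (\<lambda>g. g xs) gs)) = sem (Cp cf (map cd gs))"
  proof (rule ext)
    fix xs
    have "map (\<lambda>g. g xs) gs = map (\<lambda>g. sem (cd g) xs) gs"
      by (rule map_cong[OF refl]) (metis cd)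
    moreover have "sem (Cp cf (map cd gs)) xs = sem cf (map (\<lambda>g. sem (cd g) xs) gs)"
      by (simp add: comp_def)
    ultimately show "f (map (\<lambda>g. g xs) gs) = sem (Cp cf (map cd gs)) xs" by (simp only: cf)
  qed
  then show ?case by blast
next
  case (rf_prim n f g)
  then obtain cf cg where "f = sem cf" "g = sem cg" by blast
  then show ?case by (intro exI[of _ "Pr cf cg"]) simp
next
  case (rf_mu n g)
  then obtain cg where "g = sem cg" by blast
  then show ?case by (intro exI[of _ "Mu cg"]) simp
qed
lemma countable_recfn: "countable {f. \<exists>n. recfn n f}"
proof -
  have "{f. \<exists>n. recfn n f} \<subseteq> range sem" using recfn_sem by blast
  then show ?thesis by (rule countable_subset) simp
qed

definition cfn :: "nat \<Rightarrow> (nat list \<Rightarrow> nat) \<Rightarrow> bool" where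
  "cfn n F \<longleftrightarrow> (\<exists>f. recfn n f \<and> (\<forall>xs. length xs = n \<longrightarrow> f xs = F xs))"

lemma recfn_cfn: "recfn n f \<Longrightarrow> cfn n f" by (auto simp: cfn_def)

lemma cfn_cong: "cfn n F \<Longrightarrow> (\<And>xs. length xs = n \<Longrightarrow> F xs = G xs) \<Longrightarrow> cfn n G"
  by (auto simp: cfn_def)

lemma cfn_proj: "i < n \<Longrightarrow> cfn n (\<lambda>xs. xs ! i)"
  by (rule recfn_cfn) (rule rf_proj)

lemma cfn_zero: "cfn n (\<lambda>_. 0)" by (rule recfn_cfn) (rule rf_zero)

lemma cfn_comp:
  assumes "cfn m F" "length Gs = m" "\<forall>G\<in>set Gs. cfn n G"
  shows "cfn n (\<lambda>xs. F (map (\<lambda>G. G xs) Gs))"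
proof -
  obtain f where f: "recfn m f" "\<forall>xs. length xs = m \<longrightarrow> f xs = F xs" using assms(1) by (auto simp: cfn_def)
  have "\<forall>G\<in>set Gs. \<exists>g. recfn n g \<and> (\<forall>xs. length xs = n \<longrightarrow> g xs = G xs)" using assms(3) by (auto simp: cfn_def)
  then obtain w where w: "\<forall>G\<in>set Gs. recfn n (w G) \<and> (\<forall>xs. length xs = n \<longrightarrow> w G xs = G xs)" by metis
  have r: "recfn n (\<lambda>xs. f (map (\<lambda>g. g xs) (map w Gs)))"
    by (rule rf_comp[OF f(1)]) (use assms(2) w in auto)
  show ?thesis unfolding cfn_def
  proof (intro exI conjI allI impI)
    show "recfn n (\<lambda>xs. f (map (\<lambda>g. g xs) (map w Gs)))" by (rule r)
    fix xs :: "nat list" assume len: "length xs = n"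
    have "map (\<lambda>g. g xs) (map w Gs) = map (\<lambda>G. G xs) Gs"
      unfolding list.map_comp comp_def by (rule map_cong[OF refl]) (use w len in blast)
    then show "f (map (\<lambda>g. g xs) (map w Gs)) = F (map (\<lambda>G. G xs) Gs)"
      using f(2) assms(2) by (metis length_map)
  qed
qed

lemma cfn_comp1: "cfn 1 F \<Longrightarrow> cfn n G \<Longrightarrow> cfn n (\<lambda>xs. F [G xs])"
  using cfn_comp[of 1 F "[G]" n] by simp

lemma cfn_comp2: "cfn 2 F \<Longrightarrow> cfn n G \<Longrightarrow> cfn n H \<Longrightarrow> cfn n (\<lambda>xs. F [G xs, H xs])"
  using cfn_comp[of 2 F "[G, H]" n] by simp

lemma cfn_comp3: "cfn 3 F \<Longrightarrow> cfn n G \<Longrightarrow> cfn n H \<Longrightarrow> cfn n J \<Longrightarrow> cfn n (\<lambda>xs. F [G xs, H xs, J xs])"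
  using cfn_comp[of 3 F "[G, H, J]" n] by (simp add: numeral_3_eq_3)

lemma cfn_prim:
  assumes "cfn n F" "cfn (Suc (Suc n)) G"
  shows "cfn (Suc n) (\<lambda>xs. rec_nat (F (tl xs)) (\<lambda>k r. G (k # r # tl xs)) (hd xs))"
proof -
  obtain f where f: "recfn n f" "\<forall>xs. length xs = n \<longrightarrow> f xs = F xs" using assms(1) by (auto simp: cfn_def)
  obtain g where g: "recfn (Suc (Suc n)) g" "\<forall>xs. length xs = Suc (Suc n) \<longrightarrow> g xs = G xs" using assms(2) by (auto simp: cfn_def)
  show ?thesis unfolding cfn_def
  proof (intro exI conjI allI impI)
    show "recfn (Suc n) (\<lambda>xs. rec_nat (f (tl xs)) (\<lambda>k r. g (k # r # tl xs)) (hd xs))" by (rule rf_prim[OF f(1) g(1)])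
    fix xs :: "nat list" assume len: "length xs = Suc n"
    have "(\<lambda>k r. g (k # r # tl xs)) = (\<lambda>k r. G (k # r # tl xs))" using g(2) len by (intro ext) simp
    moreover have "f (tl xs) = F (tl xs)" using f(2) len by simp
    ultimately show "rec_nat (f (tl xs)) (\<lambda>k r. g (k # r # tl xs)) (hd xs) = rec_nat (F (tl xs)) (\<lambda>k r. G (k # r # tl xs)) (hd xs)"
      by simp
  qed
qed

lemma cfn_mu:
  assumes "cfn (Suc n) G" "\<And>xs. length xs = n \<Longrightarrow> \<exists>y. G (y # xs) = 0"
  shows "cfn n (\<lambda>xs. LEAST y. G (y # xs) = 0)"
proof -
  obtain g where g: "recfn (Suc n) g" "\<forall>xs. length xs = Suc n \<longrightarrow> g xs = G xs" using assms(1) by (auto simp: cfn_def)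
  have ex: "\<forall>xs. length xs = n \<longrightarrow> (\<exists>y. g (y # xs) = 0)" using g(2) assms(2) by simp
  show ?thesis unfolding cfn_def
  proof (intro exI conjI allI impI)
    show "recfn n (\<lambda>xs. LEAST y. g (y # xs) = 0)" by (rule rf_mu[OF g(1) ex])
    fix xs :: "nat list" assume len: "length xs = n"
    show "(LEAST y. g (y # xs) = 0) = (LEAST y. G (y # xs) = 0)" using g(2) len by simp
  qed
qed

lemma len1: "length xs = 1 \<longleftrightarrow> (\<exists>a. xs = [a])"
  by (cases xs) auto
lemma len1'[simp]: "length xs = Suc 0 \<longleftrightarrow> (\<exists>a. xs = [a])"
  by (cases xs) auto
lemma len2: "length xs = 2 \<longleftrightarrow> (\<exists>a b. xs = [a, b])"
  by (cases xs; cases "tl xs") auto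
lemma len3: "length xs = 3 \<longleftrightarrow> (\<exists>a b c. xs = [a, b, c])"
  by (cases xs; cases "tl xs"; cases "tl (tl xs)") (auto simp: numeral_3_eq_3)

lemma cfn_prim1: "cfn 1 F \<Longrightarrow> cfn 3 G \<Longrightarrow> cfn 2 (\<lambda>xs. rec_nat (F (tl xs)) (\<lambda>k r. G (k # r # tl xs)) (hd xs))"
  using cfn_prim[of 1 F G] by (simp add: numeral_3_eq_3 numeral_2_eq_2)
lemma cfn_prim0: "cfn 0 F \<Longrightarrow> cfn 2 G \<Longrightarrow> cfn 1 (\<lambda>xs. rec_nat (F (tl xs)) (\<lambda>k r. G (k # r # tl xs)) (hd xs))"
  using cfn_prim[of 0 F G] by (simp add: numeral_2_eq_2)

lemma cfn_succ: "cfn 1 (\<lambda>xs. Suc (xs ! 0))"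
  by (rule cfn_cong[OF recfn_cfn[OF rf_succ]]) (auto simp: len1)

lemma cfn_Suc: "cfn n F \<Longrightarrow> cfn n (\<lambda>xs. Suc (F xs))"
  using cfn_comp1[OF cfn_succ, of n F] by simp

lemma cfn_const: "cfn n (\<lambda>_. k)"
  by (induction k) (auto intro: cfn_zero cfn_Suc[of n "\<lambda>_. _", simplified])

lemma rec_add: "rec_nat b (\<lambda>k r. Suc r) a = a + b" by (induction a) auto
lemma cfn_add2: "cfn 2 (\<lambda>xs. xs ! 0 + xs ! 1)"
proof -
  have "cfn 3 (\<lambda>ys. Suc (ys ! 1))" by (rule cfn_Suc, rule cfn_proj) simp
  from cfn_prim1[OF cfn_proj[of 0 1] this]
  show ?thesis by (rule cfn_cong) (auto simp: len2 rec_add)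
qed
lemma cfn_add: "cfn n F \<Longrightarrow> cfn n G \<Longrightarrow> cfn n (\<lambda>xs. F xs + G xs)"
  using cfn_comp2[OF cfn_add2, of n F G] by simp

lemma rec_mult: "rec_nat 0 (\<lambda>k r. r + b) a = a * b" by (induction a) auto
lemma cfn_mult2: "cfn 2 (\<lambda>xs. xs ! 0 * xs ! 1)"
proof -
  have "cfn 3 (\<lambda>ys. ys ! 1 + ys ! 2)" by (intro cfn_add cfn_proj) auto
  from cfn_prim1[OF cfn_const[of 1 0] this]
  show ?thesis by (rule cfn_cong) (auto simp: len2 rec_mult)
qed
lemma cfn_mult: "cfn n F \<Longrightarrow> cfn n G \<Longrightarrow> cfn n (\<lambda>xs. F xs * G xs)"
  using cfn_comp2[OF cfn_mult2, of n F G] by simp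

lemma rec_pred: "rec_nat 0 (\<lambda>k r. k) a = a - 1" by (cases a) auto
lemma cfn_pred1: "cfn 1 (\<lambda>xs. xs ! 0 - 1)"
proof -
  from cfn_prim0[OF cfn_const[of 0 0] cfn_proj[of 0 2]]
  show ?thesis by (rule cfn_cong) (auto simp: len1 rec_pred)
qed
lemma rec_sub: "rec_nat b (\<lambda>k r. r - Suc 0) a = b - a" by (induction a) auto
lemma cfn_sub2: "cfn 2 (\<lambda>xs. xs ! 1 - xs ! 0)"
proof -
  have "cfn 3 (\<lambda>ys. ys ! 1 - 1)" using cfn_comp1[OF cfn_pred1 cfn_proj[of 1 3]] by simp
  from cfn_prim1[OF cfn_proj[of 0 1] this]
  show ?thesis by (rule cfn_cong) (auto simp: len2 rec_sub)
qed
lemma cfn_sub: "cfn n F \<Longrightarrow> cfn n G \<Longrightarrow> cfn n (\<lambda>xs. F xs - G xs)"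
  using cfn_comp2[OF cfn_sub2, of n G F] by simp

lemma cfn_if:
  assumes "cfn n T" "cfn n X" "cfn n Y"
  shows "cfn n (\<lambda>xs. if T xs = 0 then Y xs else X xs)"
proof -
  have "cfn n (\<lambda>xs. (1 - (1 - T xs)) * X xs + (1 - T xs) * Y xs)"
    by (intro cfn_add cfn_mult cfn_sub cfn_const assms)
  then show ?thesis by (rule cfn_cong) auto
qed

lemma cfn_if_le:
  assumes "cfn n A" "cfn n B" "cfn n X" "cfn n Y"
  shows "cfn n (\<lambda>xs. if A xs \<le> B xs then X xs else Y xs)"
  using cfn_if[OF cfn_sub[OF assms(1,2)] assms(4,3)] by (rule cfn_cong) auto

lemma cfn_if_eq:
  assumes "cfn n A" "cfn n B" "cfn n X" "cfn n Y"
  shows "cfn n (\<lambda>xs. if A xs = B xs then X xs else Y xs)"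
proof -
  have "cfn n (\<lambda>xs. if (A xs - B xs) + (B xs - A xs) = 0 then X xs else Y xs)"
    by (intro cfn_if cfn_add cfn_sub assms)
  then show ?thesis by (rule cfn_cong) auto
qed

lemma least_div2: "(LEAST y. Suc e - (2 * y + 2) = (0::nat)) = e div 2"
proof (rule Least_equality)
  show "Suc e - (2 * (e div 2) + 2) = 0" by linarith
  show "\<And>y. Suc e - (2 * y + 2) = 0 \<Longrightarrow> e div 2 \<le> y" by linarith
qed

lemma least_div2': "(LEAST y. e \<le> Suc (2 * y)) = e div (2::nat)"
  by (rule Least_equality) linarith+

lemma cfn_div2_1: "cfn 1 (\<lambda>xs. xs ! 0 div 2)"
proof -
  have c: "cfn (Suc 1) (\<lambda>ys. Suc (ys ! 1) - (2 * ys ! 0 + 2))"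
    unfolding Suc_1 by (intro cfn_sub cfn_Suc cfn_add cfn_mult cfn_const cfn_proj) auto
  have e: "\<exists>y. Suc ((y # xs) ! 1) - (2 * (y # xs) ! 0 + 2) = 0" if "length xs = 1" for xs :: "nat list"
    by (rule exI[of _ "xs ! 0"]) simp
  have "cfn 1 (\<lambda>xs. LEAST y. Suc ((y # xs) ! 1) - (2 * (y # xs) ! 0 + 2) = 0)"
    by (rule cfn_mu[OF c e]) assumption
  then show ?thesis by (rule cfn_cong) (auto simp: len1 least_div2 least_div2')
qed
lemma cfn_div2: "cfn n F \<Longrightarrow> cfn n (\<lambda>xs. F xs div 2)"
  using cfn_comp1[OF cfn_div2_1, of n F] by simp

lemma rec_divpow: "rec_nat (e::nat) (\<lambda>k r. r div 2) i = e div 2 ^ i"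
  by (induction i) (simp_all add: power_Suc2 div_mult2_eq del: power_Suc)
lemma cfn_divpow2: "cfn 2 (\<lambda>xs. xs ! 1 div 2 ^ (xs ! 0))"
proof -
  have "cfn 3 (\<lambda>ys. ys ! 1 div 2)" by (intro cfn_div2 cfn_proj) auto
  from cfn_prim1[OF cfn_proj[of 0 1] this]
  show ?thesis by (rule cfn_cong) (auto simp: len2 rec_divpow)
qed
lemma cfn_divpow: "cfn n E \<Longrightarrow> cfn n I \<Longrightarrow> cfn n (\<lambda>xs. E xs div 2 ^ I xs)"
  using cfn_comp2[OF cfn_divpow2, of n I E] by simp

lemma cfn_mod2: "cfn n F \<Longrightarrow> cfn n (\<lambda>xs. F xs mod 2)"
proof -
  assume "cfn n F"
  then have "cfn n (\<lambda>xs. F xs - 2 * (F xs div 2))" by (intro cfn_sub cfn_mult cfn_div2 cfn_const)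
  then show ?thesis by (rule cfn_cong) (simp add: minus_div_mult_eq_mod[symmetric] mult.commute)
qed

lemma rec_prod: "rec_nat (Suc 0) (\<lambda>k r. r * H k) j = (\<Prod>i<j. (H i::nat))"
  by (induction j) auto
lemma cfn_prod2:
  assumes "cfn 2 H"
  shows "cfn 2 (\<lambda>xs. \<Prod>i<xs ! 0. H [i, xs ! 1])"
proof -
  have "cfn 3 (\<lambda>ys. ys ! 1 * H [ys ! 0, ys ! 2])"
    by (intro cfn_mult cfn_proj cfn_comp2[OF assms]) auto
  from cfn_prim1[OF cfn_const[of 1 1] this]
  show ?thesis by (rule cfn_cong) (auto simp: len2 rec_prod)
qed

definition bit :: "bool \<Rightarrow> nat" where "bit x = (if x then 1 else 0)"

lemma enc_snoc: "enc_sit (s @ [x]) = 2 * enc_sit s + bit x"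
  by (simp add: enc_sit_def bit_def)
lemma enc_nil[simp]: "enc_sit [] = 1" by (simp add: enc_sit_def)
lemma enc_pos: "enc_sit s \<ge> 1"
  by (induction s rule: rev_induct) (auto simp: enc_snoc)
lemma enc_len: "length s < enc_sit s"
proof (induction s rule: rev_induct)
  case Nil then show ?case by simp
next
  case (snoc x s) then show ?case by (simp add: enc_snoc)
qed

lemma cfn_Nprod:
  assumes "cfn 2 (\<lambda>xs. \<Phi> (xs ! 0) (xs ! 1))"
  shows "cfn 1 (\<lambda>xs. \<Prod>i<xs ! 0. (if xs ! 0 div 2 ^ Suc i = 0 then 1
            else \<Phi> (xs ! 0 div 2 ^ Suc i) ((xs ! 0 div 2 ^ i) mod 2)))"
proof -
  define H where "H xs = (if xs ! 1 div 2 ^ Suc (xs ! 0) = 0 then 1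
            else \<Phi> (xs ! 1 div 2 ^ Suc (xs ! 0)) ((xs ! 1 div 2 ^ (xs ! 0)) mod 2))" for xs :: "nat list"
  have "cfn 2 (\<lambda>xs. if xs ! 1 div 2 ^ Suc (xs ! 0) = 0 then 1
            else \<Phi> (xs ! 1 div 2 ^ Suc (xs ! 0)) ((xs ! 1 div 2 ^ (xs ! 0)) mod 2))"
    by (intro cfn_if cfn_const cfn_divpow cfn_proj cfn_Suc cfn_mod2 cfn_comp2[OF assms, of 2, simplified]) auto
  then have "cfn 2 H" unfolding H_def .
  from cfn_comp2[OF cfn_prod2[OF this] cfn_proj[of 0 1] cfn_proj[of 0 1]]
  show ?thesis by (rule cfn_cong) (auto simp: H_def cong: if_cong)
qed

lemma Nprod_enc:
  "length s \<le> L \<Longrightarrow> (\<Prod>i<L. (if enc_sit s div 2 ^ Suc i = 0 then 1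
            else \<Phi> (enc_sit s div 2 ^ Suc i) ((enc_sit s div 2 ^ i) mod 2)))
    = (\<Prod>j<length s. \<Phi> (enc_sit (take j s)) (bit (s ! j)))"
proof (induction s arbitrary: L rule: rev_induct)
  case Nil
  have "(1::nat) < 2 * 2 ^ i" for i by (induction i) auto
  then show ?case by (simp add: div_less)
next
  case (snoc x s)
  then obtain L' where L: "L = Suc L'" "length s \<le> L'" by (cases L) auto
  define e where "e = enc_sit s"
  have e1: "e \<ge> 1" using enc_pos by (simp add: e_def)
  have d1: "(2 * e + bit x) div 2 ^ Suc (Suc i) = e div 2 ^ Suc i" for i
  proof -
    have "(2 * e + bit x) div 2 ^ Suc (Suc i) = (2 * e + bit x) div 2 div 2 ^ Suc i"
      by (simp only: power_Suc div_mult2_eq)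
    also have "(2 * e + bit x) div 2 = e" by (simp add: bit_def)
    finally show ?thesis .
  qed
  have d2: "(2 * e + bit x) div 2 ^ Suc i = e div 2 ^ i" for i
  proof -
    have "(2 * e + bit x) div 2 ^ Suc i = (2 * e + bit x) div 2 div 2 ^ i"
      by (simp only: power_Suc div_mult2_eq)
    also have "(2 * e + bit x) div 2 = e" by (simp add: bit_def)
    finally show ?thesis .
  qed
  have m: "(2 * e + bit x) mod 2 = bit x" by (simp add: bit_def)
  have "(\<Prod>i<L. (if enc_sit (s @ [x]) div 2 ^ Suc i = 0 then 1
            else \<Phi> (enc_sit (s @ [x]) div 2 ^ Suc i) ((enc_sit (s @ [x]) div 2 ^ i) mod 2)))
     = (if e = 0 then 1 else \<Phi> e (bit x)) *
       (\<Prod>i<L'. (if e div 2 ^ Suc i = 0 then 1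
            else \<Phi> (e div 2 ^ Suc i) ((e div 2 ^ i) mod 2)))"
    unfolding L(1) prod.lessThan_Suc_shift enc_snoc e_def[symmetric]
    by (simp only: d1 d2 m power_0 div_by_1 d2[of 0, simplified])
  also have "\<dots> = \<Phi> e (bit x) * (\<Prod>j<length s. \<Phi> (enc_sit (take j s)) (bit (s ! j)))"
    using snoc.IH[OF L(2)] e1 unfolding e_def by simp
  also have "\<dots> = (\<Prod>j<length (s @ [x]). \<Phi> (enc_sit (take j (s @ [x]))) (bit ((s @ [x]) ! j)))"
    by (simp add: prod.lessThan_Suc e_def nth_append mult.commute)
  finally show ?case .
qed

lemma Nprod_enc': "(\<Prod>i<enc_sit s. (if enc_sit s div 2 ^ Suc i = 0 then 1
            else \<Phi> (enc_sit s div 2 ^ Suc i) ((enc_sit s div 2 ^ i) mod 2)))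
    = (\<Prod>j<length s. \<Phi> (enc_sit (take j s)) (bit (s ! j)))"
  using Nprod_enc[of s "enc_sit s"] enc_len[of s] by simp

definition pfst :: "nat \<Rightarrow> nat" where
  "pfst w = (LEAST y. ((prod_encode (y, 0) - w) + (w - prod_encode (y, 0))) *
                   ((prod_encode (y, 1) - w) + (w - prod_encode (y, 1))) * (w - y) = 0)"
definition psnd :: "nat \<Rightarrow> nat" where
  "psnd w = (if prod_encode (pfst w, 1) = w then 1 else 0)"

lemma pfst_enc: "b \<le> 1 \<Longrightarrow> pfst (prod_encode (e, b)) = e"
  unfolding pfst_def
proof (rule Least_equality)
  assume b: "b \<le> 1"
  then show "((prod_encode (e, 0) - prod_encode (e, b)) + (prod_encode (e, b) - prod_encode (e, 0))) *
    ((prod_encode (e, 1) - prod_encode (e, b)) + (prod_encode (e, b) - prod_encode (e, 1))) * (prod_encode (e, b) - e) = 0"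
    by (cases b) auto
  fix y assume "((prod_encode (y, 0) - prod_encode (e, b)) + (prod_encode (e, b) - prod_encode (y, 0))) *
    ((prod_encode (y, 1) - prod_encode (e, b)) + (prod_encode (e, b) - prod_encode (y, 1))) * (prod_encode (e, b) - y) = 0"
  then have "prod_encode (y, 0) = prod_encode (e, b) \<or> prod_encode (y, 1) = prod_encode (e, b) \<or> prod_encode (e, b) \<le> y"
    by auto
  then show "e \<le> y" using le_prod_encode_1[of e b] by auto
qed

lemma psnd_enc: "b \<le> 1 \<Longrightarrow> psnd (prod_encode (e, b)) = b"
  by (cases b) (auto simp: psnd_def pfst_enc)

lemma cfn_pe: "cfn n A \<Longrightarrow> cfn n B \<Longrightarrow> cfn n (\<lambda>xs. prod_encode (A xs, B xs))"
proof -
  assume a: "cfn n A" and b: "cfn n B"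
  have "cfn n (\<lambda>xs. ((A xs + B xs) * Suc (A xs + B xs)) div 2 + A xs)"
    by (intro cfn_add cfn_div2 cfn_mult cfn_Suc a b)
  then show ?thesis by (rule cfn_cong) (simp add: prod_encode_def triangle_def)
qed

lemma cfn_pfst: "cfn 1 (\<lambda>xs. pfst (xs ! 0))"
proof -
  have c: "cfn (Suc 1) (\<lambda>ys. ((prod_encode (ys ! 0, 0) - ys ! 1) + (ys ! 1 - prod_encode (ys ! 0, 0))) *
                   ((prod_encode (ys ! 0, 1) - ys ! 1) + (ys ! 1 - prod_encode (ys ! 0, 1))) * (ys ! 1 - ys ! 0))"
    unfolding Suc_1 by (intro cfn_mult cfn_add cfn_sub cfn_pe cfn_proj cfn_const) auto
  have e: "\<exists>y. ((prod_encode ((y # xs) ! 0, 0) - (y # xs) ! 1) + ((y # xs) ! 1 - prod_encode ((y # xs) ! 0, 0))) *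
                   ((prod_encode ((y # xs) ! 0, 1) - (y # xs) ! 1) + ((y # xs) ! 1 - prod_encode ((y # xs) ! 0, 1))) * ((y # xs) ! 1 - (y # xs) ! 0) = 0"
    if "length xs = 1" for xs :: "nat list"
    by (rule exI[of _ "xs ! 0"]) simp
  have "cfn 1 (\<lambda>xs. LEAST y. ((prod_encode ((y # xs) ! 0, 0) - (y # xs) ! 1) + ((y # xs) ! 1 - prod_encode ((y # xs) ! 0, 0))) *
                   ((prod_encode ((y # xs) ! 0, 1) - (y # xs) ! 1) + ((y # xs) ! 1 - prod_encode ((y # xs) ! 0, 1))) * ((y # xs) ! 1 - (y # xs) ! 0) = 0)"
    by (rule cfn_mu[OF c e]) assumption
  then show ?thesis by (rule cfn_cong) (auto simp: pfst_def)
qed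

lemma cfn_psnd: "cfn 1 (\<lambda>xs. psnd (xs ! 0))"
proof -
  have "cfn 1 (\<lambda>xs. if prod_encode (pfst (xs ! 0), 1) = xs ! 0 then 1 else 0)"
    by (intro cfn_if_eq cfn_pe cfn_const cfn_proj cfn_pfst) auto
  then show ?thesis by (rule cfn_cong) (simp add: psnd_def)
qed

lemma E_r_simp: "E_r r f = r * f True + (1 - r) * f False" by (simp add: E_r_def)

lemma min_le_E: assumes "0 \<le> r" "r \<le> 1"
  shows "min (f True) (f False) \<le> E_r r f"
proof -
  have "r * min (f True) (f False) \<le> r * f True" using assms by (intro mult_left_mono) auto
  moreover have "(1-r) * min (f True) (f False) \<le> (1-r) * f False" using assms by (intro mult_left_mono) auto
  ultimately show ?thesis by (simp add: E_r_def algebra_simps)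
qed

lemma prefix_Suc: "prefix \<omega> (Suc n) = prefix \<omega> n @ [\<omega> n]"
  by (simp add: prefix_def)

lemma prefix_0[simp]: "prefix \<omega> 0 = []" by (simp add: prefix_def)

lemma length_prefix[simp]: "length (prefix \<omega> n) = n" by (simp add: prefix_def)

lemma core:
  fixes \<psi> V :: "situation \<Rightarrow> real" and TT :: "(situation \<Rightarrow> real) set"
  assumes pq: "0 \<le> p" "p < q" "q \<le> 1" and cnt: "countable TT"
    and TTp: "\<forall>T\<in>TT. test_process T \<and> (\<forall>s r. r \<in> {p..q} \<longrightarrow> E_r r (\<lambda>x. T (s @ [x])) \<le> T s)"
    and psi: "\<forall>s. \<psi> s \<in> {p..q}"
    and Vp: "\<forall>s. 0 \<le> V s" "V [] = 1" "\<forall>s. E_r (\<psi> s) (\<lambda>x. V (s @ [x])) \<le> V s"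
  shows "\<exists>\<omega>. (\<forall>T\<in>TT. \<exists>B. \<forall>n. T (prefix \<omega> n) \<le> B) \<and> (\<forall>n. V (prefix \<omega> n) \<le> 3)"
proof -
  define TT' where "TT' = insert (\<lambda>_. 1) TT"
  have cnt': "countable TT'" "TT' \<noteq> {}" using cnt by (auto simp: TT'_def)
  have TTp': "\<forall>T\<in>TT'. (\<forall>s. 0 \<le> T s) \<and> T [] = 1 \<and> (\<forall>s r. r \<in> {p..q} \<longrightarrow> E_r r (\<lambda>x. T (s @ [x])) \<le> T s)"
    using TTp by (auto simp: TT'_def test_process_def E_r_def algebra_simps)
  define Tn where "Tn i = from_nat_into TT' i" for i
  have Tn_in: "Tn i \<in> TT'" for i using cnt' by (simp add: Tn_def from_nat_into)
  have Tn_pos: "0 \<le> Tn i s" for i s using Tn_in TTp' by blast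
  have Tn_nil: "Tn i [] = 1" for i using Tn_in TTp' by blast
  have Tn_sm: "r \<in> {p..q} \<Longrightarrow> E_r r (\<lambda>x. Tn i (s @ [x])) \<le> Tn i s" for i s r using Tn_in TTp' by blast
  define K where "K = max (1/q) (1/(1-p))"
  have qpos: "q > 0" "1 - p > 0" using pq by auto
  have K1: "K \<ge> 1" using pq by (auto simp: K_def le_max_iff_disj)
  have step: "Tn i (s @ [x]) \<le> K * Tn i s" for i s x
  proof (cases x)
    case True
    have "q * Tn i (s @ [True]) + (1 - q) * Tn i (s @ [False]) \<le> Tn i s"
      using Tn_sm[of q i s] pq by (simp add: E_r_def)
    moreover have "(1 - q) * Tn i (s @ [False]) \<ge> 0" using pq Tn_pos by simp
    ultimately have "q * Tn i (s @ [True]) \<le> Tn i s" by linarith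
    then have "Tn i (s @ [True]) \<le> (1/q) * Tn i s" using qpos by (simp add: field_simps)
    also have "\<dots> \<le> K * Tn i s" using Tn_pos by (intro mult_right_mono) (auto simp: K_def)
    finally show ?thesis using True by simp
  next
    case False
    have "p * Tn i (s @ [True]) + (1 - p) * Tn i (s @ [False]) \<le> Tn i s"
      using Tn_sm[of p i s] pq by (simp add: E_r_def)
    moreover have "p * Tn i (s @ [True]) \<ge> 0" using pq Tn_pos by simp
    ultimately have "(1 - p) * Tn i (s @ [False]) \<le> Tn i s" by linarith
    then have "Tn i (s @ [False]) \<le> (1/(1-p)) * Tn i s" using qpos by (simp add: field_simps)
    also have "\<dots> \<le> K * Tn i s" using Tn_pos by (intro mult_right_mono) (auto simp: K_def)
    finally show ?thesis using False by simp
  qed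
  have bound: "Tn i s \<le> K ^ length s" for i s
  proof (induction s rule: rev_induct)
    case Nil then show ?case by (simp add: Tn_nil)
  next
    case (snoc x s)
    have "Tn i (s @ [x]) \<le> K * Tn i s" by (rule step)
    also have "\<dots> \<le> K * K ^ length s" using snoc K1 by (intro mult_left_mono) auto
    finally show ?case by simp
  qed
  have summ: "summable (\<lambda>i. (1/2::real)^i * Tn i s)" for s
  proof (rule summable_comparison_test)
    show "\<exists>N. \<forall>n\<ge>N. norm ((1/2::real)^n * Tn n s) \<le> (1/2)^n * K ^ length s"
      using bound Tn_pos by (auto intro!: mult_left_mono)
    show "summable (\<lambda>n. (1/2::real)^n * K ^ length s)"
      by (intro summable_mult2 summable_geometric) simp
  qed
  define W where "W s = (\<Sum>i. (1/2::real)^i * Tn i s)" for s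
  have W_nil: "W [] = 2"
    using suminf_geometric[of "1/2::real"] by (simp add: W_def Tn_nil)
  have W_pos: "0 \<le> W s" for s unfolding W_def using summ Tn_pos by (intro suminf_nonneg) auto
  have W_term: "(1/2::real)^i * Tn i s \<le> W s" for i s
  proof -
    have "sum (\<lambda>i. (1/2::real)^i * Tn i s) {i} \<le> W s" unfolding W_def
      using summ Tn_pos by (intro sum_le_suminf) auto
    then show ?thesis by simp
  qed
  have W_sm: "E_r r (\<lambda>x. W (s @ [x])) \<le> W s" if r: "r \<in> {p..q}" for r s
  proof -
    have "E_r r (\<lambda>x. W (s @ [x])) = (\<Sum>i. r * ((1/2::real)^i * Tn i (s @ [True])) + (1-r) * ((1/2::real)^i * Tn i (s @ [False])))"
      unfolding E_r_def W_def
      using summ by (simp add: suminf_add[symmetric] suminf_mult summable_mult)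
    also have "\<dots> \<le> (\<Sum>i. (1/2::real)^i * Tn i s)"
    proof (rule suminf_le)
      fix i
      have "r * ((1/2::real)^i * Tn i (s @ [True])) + (1-r) * ((1/2::real)^i * Tn i (s @ [False]))
          = (1/2)^i * E_r r (\<lambda>x. Tn i (s @ [x]))" by (simp add: E_r_def algebra_simps)
      also have "\<dots> \<le> (1/2)^i * Tn i s" using Tn_sm[OF r] by (intro mult_left_mono) auto
      finally show "r * ((1/2::real)^i * Tn i (s @ [True])) + (1-r) * ((1/2::real)^i * Tn i (s @ [False])) \<le> (1/2)^i * Tn i s" .
      show "summable (\<lambda>i. r * ((1/2::real)^i * Tn i (s @ [True])) + (1-r) * ((1/2::real)^i * Tn i (s @ [False])))"
        using summ by (intro summable_add summable_mult)
      show "summable (\<lambda>i. (1/2::real)^i * Tn i s)" by (rule summ)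
    qed
    finally show ?thesis by (simp add: W_def)
  qed
  define G where "G s = W s + V s" for s
  have G_step: "min (G (s @ [True])) (G (s @ [False])) \<le> G s" for s
  proof -
    have r01: "0 \<le> \<psi> s" "\<psi> s \<le> 1" using psi pq by (auto dest: spec[of _ s])
    have "min (G (s @ [True])) (G (s @ [False])) \<le> E_r (\<psi> s) (\<lambda>x. G (s @ [x]))"
      using min_le_E[OF r01, of "\<lambda>x. G (s @ [x])"] by simp
    also have "\<dots> = E_r (\<psi> s) (\<lambda>x. W (s @ [x])) + E_r (\<psi> s) (\<lambda>x. V (s @ [x]))"
      by (simp add: E_r_def G_def algebra_simps)
    also have "\<dots> \<le> W s + V s" using W_sm[of "\<psi> s" s] psi Vp(3) by (intro add_mono) auto
    finally show ?thesis by (simp add: G_def)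
  qed
  define ch where "ch s = (G (s @ [True]) \<le> G (s @ [False]))" for s
  have ch_le: "G (s @ [ch s]) \<le> G s" for s using G_step[of s] by (cases "G (s @ [True]) \<le> G (s @ [False])") (auto simp: ch_def min_def)
  define pre where "pre n = rec_nat [] (\<lambda>k t. t @ [ch t]) n" for n
  have pre_Suc: "pre (Suc n) = pre n @ [ch (pre n)]" for n by (simp add: pre_def)
  define \<omega> where "\<omega> n = ch (pre n)" for n
  have pref: "prefix \<omega> n = pre n" for n
    by (induction n) (simp_all add: prefix_Suc pre_Suc \<omega>_def pre_def)
  have Gb: "G (pre n) \<le> 3" for n
  proof (induction n)
    case 0 then show ?case by (simp add: pre_def G_def W_nil Vp(2))
  next
    case (Suc n) then show ?case using ch_le[of "pre n"] by (simp add: pre_Suc)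
  qed
  have "\<forall>T\<in>TT. \<exists>B. \<forall>n. T (prefix \<omega> n) \<le> B"
  proof
    fix T assume "T \<in> TT"
    then have "T \<in> TT'" by (simp add: TT'_def)
    then obtain i where i: "Tn i = T" using from_nat_into_surj[OF cnt'(1)] by (auto simp: Tn_def)
    have "T (prefix \<omega> n) \<le> 3 * 2^i" for n
    proof -
      have "(1/2::real)^i * T (pre n) \<le> 3"
        using W_term[of i "pre n"] Gb[of n] Vp(1) i by (simp add: G_def) (smt (verit))
      then show ?thesis by (simp add: pref field_simps)
    qed
    then show "\<exists>B. \<forall>n. T (prefix \<omega> n) \<le> B" by blast
  qed
  moreover have "\<forall>n. V (prefix \<omega> n) \<le> 3"
    using Gb W_pos by (simp add: pref G_def) (smt (verit))
  ultimately show ?thesis by blast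
qed

definition RF :: "(nat list \<Rightarrow> nat) set" where "RF = {f. \<exists>n. recfn n f}"

lemma countable_RF: "countable RF" using countable_recfn by (simp add: RF_def)

lemma countable_rr2: "countable {q. recursive_rat2 enc q}"
proof -
  have "{q. recursive_rat2 enc q} \<subseteq> (\<lambda>(a, b, c). \<lambda>d n. rat_code (a [enc d, n]) (b [enc d, n]) (c [enc d, n])) ` (RF \<times> RF \<times> RF)"
  proof
    fix q assume "q \<in> {q. recursive_rat2 enc q}"
    then obtain a b c where "recfn 2 a" "recfn 2 b" "recfn 2 c"
      "\<forall>d n. q d n = rat_code (a [enc d, n]) (b [enc d, n]) (c [enc d, n])"
      by (auto simp: recursive_rat2_def)
    then show "q \<in> (\<lambda>(a, b, c). \<lambda>d n. rat_code (a [enc d, n]) (b [enc d, n]) (c [enc d, n])) ` (RF \<times> RF \<times> RF)"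
      by (intro image_eqI[where x="(a, b, c)"]) (auto simp: RF_def)
  qed
  then show ?thesis
    by (rule countable_subset) (intro countable_image countable_SIGMA countable_RF)
qed

lemma countable_rr: "countable {q. recursive_rat enc q}"
proof -
  have "{q. recursive_rat enc q} \<subseteq> (\<lambda>(a, b, c). \<lambda>d. rat_code (a [enc d]) (b [enc d]) (c [enc d])) ` (RF \<times> RF \<times> RF)"
  proof
    fix q assume "q \<in> {q. recursive_rat enc q}"
    then obtain a b c where "recfn 1 a" "recfn 1 b" "recfn 1 c"
      "\<forall>d. q d = rat_code (a [enc d]) (b [enc d]) (c [enc d])"
      by (auto simp: recursive_rat_def)
    then show "q \<in> (\<lambda>(a, b, c). \<lambda>d. rat_code (a [enc d]) (b [enc d]) (c [enc d])) ` (RF \<times> RF \<times> RF)"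
      by (intro image_eqI[where x="(a, b, c)"]) (auto simp: RF_def)
  qed
  then show ?thesis
    by (rule countable_subset) (intro countable_image countable_SIGMA countable_RF)
qed

lemma countable_lsc: "countable {r. lower_semicomputable enc r}"
proof -
  have "{r. lower_semicomputable enc r} \<subseteq> (\<lambda>q. \<lambda>d. lim (q d)) ` {q. recursive_rat2 enc q}"
  proof
    fix r assume "r \<in> {r. lower_semicomputable enc r}"
    then obtain q where q: "recursive_rat2 enc q" "\<forall>d. mono (q d) \<and> (q d \<longlonglongrightarrow> r d)"
      by (auto simp: lower_semicomputable_def)
    have "r = (\<lambda>d. lim (q d))" using q(2) by (intro ext) (metis limI)
    then show "r \<in> (\<lambda>q. \<lambda>d. lim (q d)) ` {q. recursive_rat2 enc q}" using q(1) by blast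
  qed
  then show ?thesis by (rule countable_subset) (intro countable_image countable_rr2)
qed

lemma countable_F_class: "countable (F_class R)"
proof (cases R)
  case R_ML
  have "F_class R \<subseteq> {r. lower_semicomputable enc_sit r}" using R_ML by (auto simp: F_class_def)
  then show ?thesis by (rule countable_subset) (rule countable_lsc)
next
  case R_wML
  have "F_class R \<subseteq> (\<lambda>h. generated (\<lambda>s x. h (s, x))) ` {h. lower_semicomputable enc_sit_bool h}"
  proof
    fix F assume "F \<in> F_class R"
    then obtain D where D: "lower_semicomputable enc_sit_bool (\<lambda>p. D (fst p) (snd p))" "F = generated D"
      using R_wML by (auto simp: F_class_def)
    have "F = (\<lambda>h. generated (\<lambda>s x. h (s, x))) (\<lambda>p. D (fst p) (snd p))" using D(2) by simp
    then show "F \<in> (\<lambda>h. generated (\<lambda>s x. h (s, x))) ` {h. lower_semicomputable enc_sit_bool h}"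
      using D(1) by (intro image_eqI[where x="\<lambda>p. D (fst p) (snd p)"]) auto
  qed
  then show ?thesis by (rule countable_subset) (intro countable_image countable_lsc)
next
  case R_C
  have "F_class R \<subseteq> {r. recursive_rat enc_sit r}" using R_C by (auto simp: F_class_def)
  then show ?thesis by (rule countable_subset) (rule countable_rr)
next
  case R_S
  have "F_class R \<subseteq> {r. recursive_rat enc_sit r}" using R_S by (auto simp: F_class_def)
  then show ?thesis by (rule countable_subset) (rule countable_rr)
qed

lemma countable_tsm: "countable (test_supermartingales R \<phi>)"
  by (rule countable_subset[OF _ countable_F_class[of R]]) (auto simp: test_supermartingales_def)

lemma E_r_bound: "0 \<le> r \<Longrightarrow> r \<le> 1 \<Longrightarrow> E_r r f \<le> \<bar>f True\<bar> + \<bar>f False\<bar>"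
proof -
  assume r: "0 \<le> r" "r \<le> 1"
  have "r * f True \<le> r * \<bar>f True\<bar>" using r by (intro mult_left_mono) auto
  also have "\<dots> \<le> \<bar>f True\<bar>" using r by (simp add: mult_left_le_one_le)
  finally have 1: "r * f True \<le> \<bar>f True\<bar>" .
  have "(1-r) * f False \<le> (1-r) * \<bar>f False\<bar>" using r by (intro mult_left_mono) auto
  also have "\<dots> \<le> \<bar>f False\<bar>" using r by (simp add: mult_left_le_one_le)
  finally have 2: "(1-r) * f False \<le> \<bar>f False\<bar>" .
  show ?thesis using 1 2 by (simp add: E_r_def)
qed

lemma upper_E_interval:
  assumes "0 \<le> p" "q \<le> 1" "r \<in> {p..q}"
  shows "E_r r f \<le> upper_E {p..q} f"
  unfolding upper_E_def
proof (rule cSUP_upper[OF assms(3)])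
  show "bdd_above ((\<lambda>r. E_r r f) ` {p..q})"
    using assms(1,2) E_r_bound by (intro bdd_aboveI2[of _ _ "\<bar>f True\<bar> + \<bar>f False\<bar>"]) auto
qed

lemma tsm_interval:
  assumes "0 \<le> p" "q \<le> 1" "T \<in> test_supermartingales R (\<lambda>_. {p..q})"
  shows "test_process T \<and> (\<forall>s r. r \<in> {p..q} \<longrightarrow> E_r r (\<lambda>x. T (s @ [x])) \<le> T s)"
proof -
  have tp: "test_process T" and sm: "supermartingale (\<lambda>_. {p..q}) T"
    using assms(3) by (auto simp: test_supermartingales_def)
  have "E_r r (\<lambda>x. T (s @ [x])) \<le> T s" if r: "r \<in> {p..q}" for s r
  proof -
    have "E_r r (\<lambda>x. T (s @ [x]) - T s) \<le> upper_E {p..q} (\<lambda>x. T (s @ [x]) - T s)"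
      by (rule upper_E_interval[OF assms(1,2) r])
    also have "\<dots> \<le> 0" using sm by (auto simp: supermartingale_def)
    finally show ?thesis by (simp add: E_r_def algebra_simps)
  qed
  then show ?thesis using tp by blast
qed

lemma random_bounded:
  assumes "\<forall>T\<in>test_supermartingales R I. \<exists>B. \<forall>n. T (prefix \<omega> n) \<le> B"
  shows "random R I \<omega>"
proof (cases "R = R_S")
  case True
  show ?thesis unfolding random_def using True
  proof (clarsimp)
    fix T \<tau> assume T: "T \<in> test_supermartingales R_S I" and tau: "real_growth_function \<tau>"
      and ls: "0 \<le> limsup (\<lambda>n. ereal (T (prefix \<omega> n) - \<tau> n))"
    obtain B where B: "\<forall>n. T (prefix \<omega> n) \<le> B" using assms T True by blast
    have "\<not> bdd_above (range \<tau>)" "mono \<tau>" using tau by (auto simp: real_growth_function_def)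
    then obtain N where N: "\<tau> N > B + 1" by (metis bdd_above.I2 linorder_not_le)
    have "\<forall>\<^sub>F n in sequentially. ereal (T (prefix \<omega> n) - \<tau> n) \<le> ereal (-1)"
    proof (rule eventually_sequentiallyI[of N])
      fix n assume "N \<le> n"
      then have "\<tau> N \<le> \<tau> n" using \<open>mono \<tau>\<close> by (simp add: mono_def)
      then show "ereal (T (prefix \<omega> n) - \<tau> n) \<le> ereal (-1)" using B[rule_format, of n] N by simp
    qed
    then have "limsup (\<lambda>n. ereal (T (prefix \<omega> n) - \<tau> n)) \<le> ereal (-1)" by (rule Limsup_bounded)
    with ls have "(0::ereal) \<le> ereal (-1)" by (rule order.trans)
    then show False by simp
  qed
next
  case False
  show ?thesis unfolding random_def using False
  proof (clarsimp)
    fix T assume T: "T \<in> test_supermartingales R I" and ls: "limsup (\<lambda>n. ereal (T (prefix \<omega> n))) = \<infinity>"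
    obtain B where B: "\<forall>n. T (prefix \<omega> n) \<le> B" using assms T by blast
    have "limsup (\<lambda>n. ereal (T (prefix \<omega> n))) \<le> ereal B"
      by (rule Limsup_bounded) (use B in auto)
    with ls show False by simp
  qed
qed

lemma recfn_const: "\<exists>f. recfn n f \<and> (\<forall>xs. length xs = n \<longrightarrow> f xs = k)"
  using cfn_const[of n k] by (auto simp: cfn_def)

lemma nonrandom:
  assumes S: "S \<in> test_supermartingales R \<phi>" and d: "d > 0"
    and grow: "\<forall>n. S (prefix \<omega> n) \<ge> 1/3 + real n * d"
  shows "\<not> random R \<phi> \<omega>"
proof (cases "R = R_S")
  case True
  define M :: nat where "M = nat \<lceil>1/d\<rceil> + 1"
  have M1: "M \<ge> 1" by (simp add: M_def)
  have Md: "1 / real M \<le> d"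
  proof -
    have "1/d \<le> real M" unfolding M_def by linarith
    then show ?thesis using d M1 by (simp add: field_simps)
  qed
  define \<tau> where "\<tau> n = real n / real M" for n
  obtain c where c: "recfn 2 c" "\<forall>xs. length xs = 2 \<longrightarrow> c xs = M - 1" using recfn_const by blast
  have rr2: "recursive_rat2 id (\<lambda>d n. \<tau> d)"
    unfolding recursive_rat2_def
  proof (intro exI conjI allI)
    show "recfn 2 (\<lambda>xs. xs ! 0)" by (rule rf_proj) simp
    show "recfn 2 (\<lambda>_. 0)" by (rule rf_zero)
    show "recfn 2 c" by (rule c(1))
    fix d n
    show "\<tau> d = rat_code ([id d, n] ! 0) 0 (c [id d, n])"
      using c(2) M1 by (simp add: rat_code_def \<tau>_def of_nat_diff)
  qed
  have growth: "real_growth_function \<tau>"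
    unfolding real_growth_function_def
  proof (intro conjI)
    show "computable_real id \<tau>" unfolding computable_real_def
      by (rule exI[of _ "\<lambda>d n. \<tau> d"]) (simp add: rr2)
    show "mono \<tau>" by (auto simp: mono_def \<tau>_def divide_right_mono)
    show "\<forall>n. 0 \<le> \<tau> n" by (simp add: \<tau>_def)
    show "\<not> bdd_above (range \<tau>)"
    proof
      assume "bdd_above (range \<tau>)"
      then obtain B where B: "\<forall>n. \<tau> n \<le> B" by (auto simp: bdd_above_def)
      obtain n :: nat where "n > B * M" using reals_Archimedean2 by blast
      then have "\<tau> n > B" using M1 by (simp add: \<tau>_def field_simps)
      with B show False by (meson not_le)
    qed
  qed
  have "\<forall>\<^sub>F n in sequentially. ereal 0 \<le> ereal (S (prefix \<omega> n) - \<tau> n)"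
  proof (rule always_eventually, rule allI)
    fix n
    have "real n / real M \<le> real n * d"
      using Md by (metis divide_inverse inverse_eq_divide mult_left_mono of_nat_0_le_iff)
    then show "ereal 0 \<le> ereal (S (prefix \<omega> n) - \<tau> n)" using grow[rule_format, of n] by (simp add: \<tau>_def)
  qed
  then have "ereal 0 \<le> limsup (\<lambda>n. ereal (S (prefix \<omega> n) - \<tau> n))"
    by (intro le_Limsup) auto
  then show ?thesis unfolding random_def using True S growth by (auto simp: zero_ereal_def)
next
  case False
  have "limsup (\<lambda>n. ereal (S (prefix \<omega> n))) = \<infinity>"
  proof (rule ereal_top)
    fix B :: real
    obtain N :: nat where N: "N > B / d" using reals_Archimedean2 by blast
    have "\<forall>\<^sub>F n in sequentially. ereal B \<le> ereal (S (prefix \<omega> n))"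
    proof (rule eventually_sequentiallyI[of N])
      fix n assume n: "N \<le> n"
      have "B < real N * d" using N d by (simp add: field_simps)
      also have "\<dots> \<le> real n * d" using n d by (simp add: mult_right_mono)
      finally show "ereal B \<le> ereal (S (prefix \<omega> n))" using grow[rule_format, of n] by simp
    qed
    then show "ereal B \<le> limsup (\<lambda>n. ereal (S (prefix \<omega> n)))" by (intro le_Limsup) auto
  qed
  then show ?thesis unfolding random_def using False S by auto
qed

definition tab :: "nat \<Rightarrow> nat \<Rightarrow> nat \<Rightarrow> nat \<Rightarrow> nat \<Rightarrow> nat \<Rightarrow> nat" where
  "tab a0 a1 b0 b1 c x = (if c = 0 then (if x = 0 then a0 else a1) else (if x = 0 then b0 else b1))"

lemma cfn_tab: "cfn n C \<Longrightarrow> cfn n X \<Longrightarrow> cfn n (\<lambda>xs. tab a0 a1 b0 b1 (C xs) (X xs))"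
  unfolding tab_def by (intro cfn_if cfn_const)

lemma tab_ge1: "1 \<le> a0 \<Longrightarrow> 1 \<le> a1 \<Longrightarrow> 1 \<le> b0 \<Longrightarrow> 1 \<le> b1 \<Longrightarrow> 1 \<le> tab a0 a1 b0 b1 c x"
  by (simp add: tab_def)

lemma cfn_wit: "cfn n F \<Longrightarrow> \<exists>f. recfn n f \<and> (\<forall>xs. length xs = n \<longrightarrow> f xs = F xs)"
  by (simp add: cfn_def)

lemma id1:
  fixes a b n r :: real
  assumes "a > 0" "n > a"
  shows "r * (b / a) + (1 - r) * ((n - b) / (n - a)) = 1 + (b - a) * (r * n - a) / (a * (n - a))"
  using assms by (simp add: field_simps)

lemma generated_snoc: "generated D (s @ [x]) = generated D s * D s x"
proof -
  have "generated D (s @ [x]) = (\<Prod>i<Suc (length s). D (take i (s @ [x])) ((s @ [x]) ! i))"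
    by (simp add: generated_def)
  also have "\<dots> = (\<Prod>i<length s. D (take i (s @ [x])) ((s @ [x]) ! i)) * D s x"
    by (simp add: prod.lessThan_Suc)
  also have "(\<Prod>i<length s. D (take i (s @ [x])) ((s @ [x]) ! i)) = generated D s"
    unfolding generated_def by (intro prod.cong) (auto simp: nth_append)
  finally show ?thesis .
qed

lemma generated_nil[simp]: "generated D [] = 1" by (simp add: generated_def)

locale cset =
  fixes \<phi> :: fsys and p q :: real and R :: rnotion and CS :: "nat \<Rightarrow> nat" and k1 k2 k4 k5 N :: nat
  assumes fs: "forecasting_system \<phi>" and prec: "precise \<phi>"
    and pq: "0 \<le> p" "p < q" "q \<le> 1"
    and ks: "0 < k1" "k1 < k2" "k2 < k4" "k4 < k5" "k5 < N"
       "p < real k1 / real N" "real k5 / real N < q"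
    and CS: "cfn 1 (\<lambda>xs. CS (xs ! 0))"
    and CSp: "\<forall>s. (CS (enc_sit s) \<noteq> 0 \<longrightarrow> lower_fs \<phi> s \<le> real k4 / real N) \<and>
                   (CS (enc_sit s) = 0 \<longrightarrow> real k2 / real N \<le> lower_fs \<phi> s)"
    and eq: "Omega_R R \<phi> = Omega_R R (\<lambda>_. {p..q})"
begin

definition Pn :: "nat \<Rightarrow> nat \<Rightarrow> nat" where "Pn e x = tab (N - k1) k1 (N - k5) k5 (CS e) x"
definition Pd :: "nat \<Rightarrow> nat \<Rightarrow> nat" where "Pd e x = tab (N - k2) k2 (N - k4) k4 (CS e) x"

lemma Pn_ge1: "1 \<le> Pn e x" unfolding Pn_def using ks by (intro tab_ge1) auto
lemma Pd_ge1: "1 \<le> Pd e x" unfolding Pd_def using ks by (intro tab_ge1) auto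

lemma cfn_Pn: "cfn 2 (\<lambda>xs. Pn (xs ! 0) (xs ! 1))"
  unfolding Pn_def by (intro cfn_tab cfn_comp1[OF CS, of 2 "\<lambda>xs. xs ! 0", simplified] cfn_proj) auto
lemma cfn_Pd: "cfn 2 (\<lambda>xs. Pd (xs ! 0) (xs ! 1))"
  unfolding Pd_def by (intro cfn_tab cfn_comp1[OF CS, of 2 "\<lambda>xs. xs ! 0", simplified] cfn_proj) auto

definition Np :: "nat \<Rightarrow> nat" where
  "Np e = (\<Prod>i<e. (if e div 2 ^ Suc i = 0 then 1 else Pn (e div 2 ^ Suc i) ((e div 2 ^ i) mod 2)))"
definition Dp :: "nat \<Rightarrow> nat" where
  "Dp e = (\<Prod>i<e. (if e div 2 ^ Suc i = 0 then 1 else Pd (e div 2 ^ Suc i) ((e div 2 ^ i) mod 2)))"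

lemma cfn_Np: "cfn 1 (\<lambda>xs. Np (xs ! 0))" unfolding Np_def by (rule cfn_Nprod[OF cfn_Pn])
lemma cfn_Dp: "cfn 1 (\<lambda>xs. Dp (xs ! 0))" unfolding Dp_def by (rule cfn_Nprod[OF cfn_Pd])

lemma Dp_ge1: "1 \<le> Dp e"
  unfolding Dp_def using Pd_ge1 by (intro prod_ge_1) auto

definition Dm :: "situation \<Rightarrow> bool \<Rightarrow> real" where
  "Dm s x = real (Pn (enc_sit s) (bit x)) / real (Pd (enc_sit s) (bit x))"

definition S :: "situation \<Rightarrow> real" where "S = generated Dm"

lemma Dm_pos: "Dm s x > 0"
  using Pn_ge1[of "enc_sit s" "bit x"] Pd_ge1[of "enc_sit s" "bit x"] by (simp add: Dm_def)

lemma S_snoc: "S (s @ [x]) = S s * Dm s x" by (simp add: S_def generated_snoc)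
lemma S_nil[simp]: "S [] = 1" by (simp add: S_def)
lemma S_pos: "S s > 0"
  by (induction s rule: rev_induct) (auto simp: S_snoc Dm_pos)

lemma S_code: "S s = real (Np (enc_sit s)) / real (Dp (enc_sit s))"
proof -
  have "S s = (\<Prod>j<length s. real (Pn (enc_sit (take j s)) (bit (s ! j))) / real (Pd (enc_sit (take j s)) (bit (s ! j))))"
    by (simp add: S_def generated_def Dm_def)
  also have "\<dots> = real (\<Prod>j<length s. Pn (enc_sit (take j s)) (bit (s ! j))) / real (\<Prod>j<length s. Pd (enc_sit (take j s)) (bit (s ! j)))"
    by (simp add: prod_dividef)
  also have "\<dots> = real (Np (enc_sit s)) / real (Dp (enc_sit s))"
    unfolding Np_def Dp_def Nprod_enc' ..
  finally show ?thesis .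
qed

definition rr :: "situation \<Rightarrow> real" where "rr s = lower_fs \<phi> s"

lemma phi_single: "\<phi> s = {rr s}"
proof -
  obtain r where "\<phi> s = {r}" using prec by (auto simp: precise_def)
  then show ?thesis by (simp add: rr_def lower_fs_def)
qed

lemma rr01: "0 \<le> rr s" "rr s \<le> 1"
proof -
  have "\<exists>a b. 0 \<le> a \<and> a \<le> b \<and> b \<le> 1 \<and> \<phi> s = {a..b}" using fs by (simp add: forecasting_system_def)
  then obtain a b where "0 \<le> a" "a \<le> b" "b \<le> 1" "\<phi> s = {a..b}" by blast
  with phi_single[of s] have "rr s \<in> {a..b}" by auto
  with \<open>0 \<le> a\<close> \<open>b \<le> 1\<close> show "0 \<le> rr s" "rr s \<le> 1" by auto
qed

lemma Nk: "real N > 0" "real k1 > 0" "real k2 > real k1" "real k4 > real k2" "real k5 > real k4" "real N > real k5"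
  using ks by auto

lemma Dm_vals:
  "CS (enc_sit s) \<noteq> 0 \<Longrightarrow> Dm s True = real k5 / real k4 \<and> Dm s False = (real N - real k5) / (real N - real k4)"
  "CS (enc_sit s) = 0 \<Longrightarrow> Dm s True = real k1 / real k2 \<and> Dm s False = (real N - real k1) / (real N - real k2)"
  using ks by (auto simp: Dm_def Pn_def Pd_def tab_def bit_def of_nat_diff)

lemma E_Dm: "E_r (rr s) (Dm s) \<le> 1"
proof (cases "CS (enc_sit s) = 0")
  case False
  have r: "rr s * real N \<le> real k4" using CSp False Nk by (auto simp: rr_def field_simps)
  have "E_r (rr s) (Dm s) = rr s * (real k5 / real k4) + (1 - rr s) * ((real N - real k5) / (real N - real k4))"
    using Dm_vals(1)[OF False] by (simp add: E_r_def)
  also have "\<dots> = 1 + (real k5 - real k4) * (rr s * real N - real k4) / (real k4 * (real N - real k4))"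
    by (rule id1) (use Nk in auto)
  also have "\<dots> \<le> 1" using r Nk
    by (simp add: divide_nonpos_pos mult_nonneg_nonpos)
  finally show ?thesis .
next
  case True
  have r: "rr s * real N \<ge> real k2" using CSp True Nk by (auto simp: rr_def field_simps)
  have "E_r (rr s) (Dm s) = rr s * (real k1 / real k2) + (1 - rr s) * ((real N - real k1) / (real N - real k2))"
    using Dm_vals(2)[OF True] by (simp add: E_r_def)
  also have "\<dots> = 1 + (real k1 - real k2) * (rr s * real N - real k2) / (real k2 * (real N - real k2))"
    by (rule id1) (use Nk in auto)
  also have "\<dots> \<le> 1" using r Nk
    by (simp add: divide_nonpos_pos mult_nonpos_nonneg)
  finally show ?thesis .
qed

lemma S_super: "supermartingale \<phi> S"
  unfolding supermartingale_def
proof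
  fix s
  have "upper_E (\<phi> s) (\<lambda>x. S (s @ [x]) - S s) = E_r (rr s) (\<lambda>x. S (s @ [x]) - S s)"
    by (simp add: phi_single upper_E_def)
  also have "\<dots> = S s * (E_r (rr s) (Dm s) - 1)"
    by (simp add: E_r_def S_snoc algebra_simps)
  also have "\<dots> \<le> 0" using E_Dm[of s] S_pos[of s] by (simp add: mult_nonneg_nonpos)
  finally show "upper_E (\<phi> s) (\<lambda>x. S (s @ [x]) - S s) \<le> 0" .
qed

lemma S_tp: "test_process S" using S_pos by (auto simp: test_process_def less_imp_le)

lemma S_rr: "recursive_rat enc_sit S"
proof -
  obtain a where a: "recfn 1 a" "\<forall>xs. length xs = 1 \<longrightarrow> a xs = Np (xs ! 0)" using cfn_wit[OF cfn_Np] by blast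
  obtain c where c: "recfn 1 c" "\<forall>xs. length xs = 1 \<longrightarrow> c xs = Dp (xs ! 0) - 1"
    using cfn_wit[OF cfn_sub[OF cfn_Dp cfn_const[of 1 1]]] by blast
  show ?thesis unfolding recursive_rat_def
  proof (intro exI conjI allI)
    show "recfn 1 a" "recfn 1 (\<lambda>_. 0)" "recfn 1 c" by (fact a(1), rule rf_zero, fact c(1))
    fix d
    show "S d = rat_code (a [enc_sit d]) 0 (c [enc_sit d])"
      using a(2) c(2) Dp_ge1[of "enc_sit d"] by (simp add: S_code rat_code_def of_nat_diff)
  qed
qed

lemma S_rr2: "recursive_rat2 enc_sit (\<lambda>d n. S d)"
proof -
  obtain a where a: "recfn 2 a" "\<forall>xs. length xs = 2 \<longrightarrow> a xs = Np (xs ! 0)"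
    using cfn_wit[OF cfn_comp1[OF cfn_Np cfn_proj[of 0 2]]] by auto
  obtain c where c: "recfn 2 c" "\<forall>xs. length xs = 2 \<longrightarrow> c xs = Dp (xs ! 0) - 1"
    using cfn_wit[OF cfn_sub[OF cfn_comp1[OF cfn_Dp cfn_proj[of 0 2]] cfn_const[of 2 1]]] by auto
  show ?thesis unfolding recursive_rat2_def
  proof (intro exI conjI allI)
    show "recfn 2 a" "recfn 2 (\<lambda>_. 0)" "recfn 2 c" by (fact a(1), rule rf_zero, fact c(1))
    fix d n
    show "S d = rat_code (a [enc_sit d, n]) 0 (c [enc_sit d, n])"
      using a(2) c(2) Dp_ge1[of "enc_sit d"] by (simp add: S_code rat_code_def of_nat_diff)
  qed
qed

lemma Dm_rr2: "recursive_rat2 enc_sit_bool (\<lambda>p n. Dm (fst p) (snd p))"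
proof -
  have c1: "cfn 2 (\<lambda>xs. Pn (pfst (xs ! 0)) (psnd (xs ! 0)))"
    by (intro cfn_comp2[OF cfn_Pn, of 2 "\<lambda>xs. pfst (xs ! 0)" "\<lambda>xs. psnd (xs ! 0)", simplified]
        cfn_comp1[OF cfn_pfst, of 2 "\<lambda>xs. xs ! 0", simplified]
        cfn_comp1[OF cfn_psnd, of 2 "\<lambda>xs. xs ! 0", simplified] cfn_proj) auto
  have c2: "cfn 2 (\<lambda>xs. Pd (pfst (xs ! 0)) (psnd (xs ! 0)) - 1)"
    by (intro cfn_sub cfn_const cfn_comp2[OF cfn_Pd, of 2 "\<lambda>xs. pfst (xs ! 0)" "\<lambda>xs. psnd (xs ! 0)", simplified]
        cfn_comp1[OF cfn_pfst, of 2 "\<lambda>xs. xs ! 0", simplified]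
        cfn_comp1[OF cfn_psnd, of 2 "\<lambda>xs. xs ! 0", simplified] cfn_proj) auto
  obtain a where a: "recfn 2 a" "\<forall>xs. length xs = 2 \<longrightarrow> a xs = Pn (pfst (xs ! 0)) (psnd (xs ! 0))"
    using cfn_wit[OF c1] by auto
  obtain c where c: "recfn 2 c" "\<forall>xs. length xs = 2 \<longrightarrow> c xs = Pd (pfst (xs ! 0)) (psnd (xs ! 0)) - 1"
    using cfn_wit[OF c2] by auto
  show ?thesis unfolding recursive_rat2_def
  proof (intro exI conjI allI)
    show "recfn 2 a" "recfn 2 (\<lambda>_. 0)" "recfn 2 c" by (fact a(1), rule rf_zero, fact c(1))
    fix d :: "situation \<times> bool" and n
    have e: "enc_sit_bool d = prod_encode (enc_sit (fst d), bit (snd d))"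
      by (simp add: enc_sit_bool_def bit_def)
    have b1: "bit (snd d) \<le> 1" by (simp add: bit_def)
    show "Dm (fst d) (snd d) = rat_code (a [enc_sit_bool d, n]) 0 (c [enc_sit_bool d, n])"
      using a(2) c(2) Pd_ge1[of "enc_sit (fst d)" "bit (snd d)"]
      by (simp add: e pfst_enc[OF b1] psnd_enc[OF b1] Dm_def rat_code_def of_nat_diff)
  qed
qed

lemma S_F: "S \<in> F_class R"
proof (cases R)
  case R_ML
  have "lower_semicomputable enc_sit S"
    unfolding lower_semicomputable_def
    by (rule exI[of _ "\<lambda>d n. S d"]) (simp add: S_rr2 mono_def)
  then show ?thesis using R_ML S_tp by (simp add: F_class_def)
next
  case R_wML
  have "lower_semicomputable enc_sit_bool (\<lambda>p. Dm (fst p) (snd p))"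
    unfolding lower_semicomputable_def
    by (rule exI[of _ "\<lambda>p n. Dm (fst p) (snd p)"]) (simp add: Dm_rr2 mono_def)
  then show ?thesis using R_wML Dm_pos by (auto simp: F_class_def S_def intro!: exI[of _ Dm] less_imp_le)
next
  case R_C then show ?thesis using S_tp S_pos S_rr by (simp add: F_class_def)
next
  case R_S then show ?thesis using S_tp S_pos S_rr by (simp add: F_class_def)
qed

lemma S_tsm: "S \<in> test_supermartingales R \<phi>"
  using S_F S_tp S_super by (simp add: test_supermartingales_def)

end

context cset begin

definition \<psi> :: "situation \<Rightarrow> real" where "\<psi> s = (if CS (enc_sit s) = 0 then p else q)"

definition th1 where "th1 = q * (real k4 / real k5) + (1 - q) * ((real N - real k4) / (real N - real k5))"
definition th2 where "th2 = p * (real k2 / real k1) + (1 - p) * ((real N - real k2) / (real N - real k1))"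
definition th where "th = max th1 th2"

lemma th_bounds: "0 < th" "th < 1"
proof -
  have qN: "q * real N > real k5" using ks Nk by (simp add: field_simps)
  have pN: "p * real N < real k1" using ks Nk by (simp add: field_simps)
  have "th1 = 1 + (real k4 - real k5) * (q * real N - real k5) / (real k5 * (real N - real k5))"
    unfolding th1_def by (rule id1) (use Nk in auto)
  also have "\<dots> < 1" using Nk qN by (simp add: divide_neg_pos mult_neg_pos)
  finally have t1: "th1 < 1" .
  have "th2 = 1 + (real k2 - real k1) * (p * real N - real k1) / (real k1 * (real N - real k1))"
    unfolding th2_def by (rule id1) (use Nk in auto)
  also have "\<dots> < 1" using Nk pN by (simp add: divide_neg_pos mult_pos_neg)
  finally have t2: "th2 < 1" .
  have "0 < q * (real k4 / real k5)" using pq Nk by simp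
  moreover have "0 \<le> (1 - q) * ((real N - real k4) / (real N - real k5))" using pq Nk by simp
  ultimately have "0 < th1" unfolding th1_def by linarith
  then show "0 < th" by (simp add: th_def)
  show "th < 1" using t1 t2 by (simp add: th_def)
qed

lemma E_inv: "E_r (\<psi> s) (\<lambda>x. 1 / Dm s x) \<le> th"
proof (cases "CS (enc_sit s) = 0")
  case True
  then have "E_r (\<psi> s) (\<lambda>x. 1 / Dm s x) = th2"
    using Dm_vals(2)[OF True] by (simp add: E_r_def th2_def \<psi>_def)
  then show ?thesis by (simp add: th_def)
next
  case False
  then have "E_r (\<psi> s) (\<lambda>x. 1 / Dm s x) = th1"
    using Dm_vals(1)[OF False] by (simp add: E_r_def th1_def \<psi>_def)
  then show ?thesis by (simp add: th_def)
qed

definition V :: "situation \<Rightarrow> real" where "V s = (1 / th) ^ length s / S s"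

lemma V_super: "E_r (\<psi> s) (\<lambda>x. V (s @ [x])) \<le> V s"
proof -
  have Sp: "S s > 0" by (rule S_pos)
  have "E_r (\<psi> s) (\<lambda>x. V (s @ [x])) = (1 / th) ^ Suc (length s) / S s * E_r (\<psi> s) (\<lambda>x. 1 / Dm s x)"
    by (simp add: E_r_def V_def S_snoc algebra_simps)
  also have "\<dots> \<le> (1 / th) ^ Suc (length s) / S s * th"
    using E_inv[of s] Sp th_bounds by (intro mult_left_mono) auto
  also have "\<dots> = V s" using th_bounds by (simp add: V_def)
  finally show ?thesis .
qed

lemma contradiction: False
proof -
  have "\<exists>\<omega>. (\<forall>T\<in>test_supermartingales R (\<lambda>_. {p..q}). \<exists>B. \<forall>n. T (prefix \<omega> n) \<le> B) \<and> (\<forall>n. V (prefix \<omega> n) \<le> 3)"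
  proof (rule core[OF pq countable_tsm])
    show "\<forall>T\<in>test_supermartingales R (\<lambda>_. {p..q}). test_process T \<and> (\<forall>s r. r \<in> {p..q} \<longrightarrow> E_r r (\<lambda>x. T (s @ [x])) \<le> T s)"
      using tsm_interval pq by blast
    show "\<forall>s. \<psi> s \<in> {p..q}" using pq by (simp add: \<psi>_def)
    show "\<forall>s. 0 \<le> V s" using S_pos th_bounds by (simp add: V_def less_imp_le)
    show "V [] = 1" by (simp add: V_def)
    show "\<forall>s. E_r (\<psi> s) (\<lambda>x. V (s @ [x])) \<le> V s" using V_super by blast
  qed
  then obtain \<omega> where w1: "\<forall>T\<in>test_supermartingales R (\<lambda>_. {p..q}). \<exists>B. \<forall>n. T (prefix \<omega> n) \<le> B"
    and w2: "\<forall>n. V (prefix \<omega> n) \<le> 3" by blast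
  have rnd: "random R (\<lambda>_. {p..q}) \<omega>" by (rule random_bounded[OF w1])
  define d where "d = (1 / th - 1) / 3"
  have d: "d > 0" using th_bounds by (simp add: d_def)
  have "\<forall>n. S (prefix \<omega> n) \<ge> 1/3 + real n * d"
  proof
    fix n
    have Sp: "S (prefix \<omega> n) > 0" by (rule S_pos)
    have tp: "th ^ n > 0" using th_bounds by simp
    have "(1 / th) ^ n / S (prefix \<omega> n) \<le> 3" using w2[rule_format, of n] by (simp add: V_def)
    then have "(1 / th) ^ n \<le> 3 * S (prefix \<omega> n)" using Sp
      by (simp add: divide_le_eq)
    moreover have "1 + real n * (1 / th - 1) \<le> (1 + (1 / th - 1)) ^ n"
      by (rule Bernoulli_inequality) (use th_bounds in simp)
    ultimately show "S (prefix \<omega> n) \<ge> 1/3 + real n * d" by (simp add: d_def field_simps)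
  qed
  then have "\<not> random R \<phi> \<omega>" by (rule nonrandom[OF S_tsm d])
  with rnd eq show False by (auto simp: Omega_R_def)
qed

end

lemma consts_exist:
  assumes pq: "0 \<le> p" "p < q" "q \<le> 1"
  obtains N k0 :: nat where "0 < k0 + 1" "k0 + 5 < N" "p < real (k0 + 1) / real N" "real (k0 + 5) / real N < q"
proof -
  obtain N :: nat where N: "real N > 7 / (q - p)" using reals_Archimedean2 by blast
  have qp: "q - p > 0" using pq by simp
  have N7: "(q - p) * real N > 7" using N qp by (simp add: field_simps)
  have Npos: "real N > 0" using N qp by (smt (verit) divide_pos_pos)
  define k0 where "k0 = nat \<lfloor>p * real N\<rfloor>"
  have k0a: "real k0 \<le> p * real N" using pq Npos by (simp add: k0_def)
  have k0b: "p * real N < real k0 + 1" using pq Npos by (simp add: k0_def)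
  have h1: "p < real (k0 + 1) / real N" using k0b Npos by (simp add: field_simps)
  have N7': "q * real N - p * real N > 7" using N7 by (simp add: algebra_simps)
  have lt: "real (k0 + 5) < q * real N" using k0a N7' by simp
  then have h2: "real (k0 + 5) / real N < q" using Npos by (simp add: pos_divide_less_eq)
  have "q * real N \<le> real N" using pq Npos by simp
  then have "real (k0 + 5) < real N" using lt by linarith
  then have h3: "k0 + 5 < N" by linarith
  show thesis by (rule that[of k0 N]) (simp_all only: h1 h2 h3 zero_less_Suc add_Suc_right add_0_right)
qed

theorem corollary13:
  fixes R :: rnotion and \<phi> :: fsys and p q :: real
  assumes "forecasting_system \<phi>" and "precise \<phi>"
    and "0 \<le> p" and "p < q" and "q \<le> 1"
    and "Omega_R R \<phi> = Omega_R R (\<lambda>_. {p..q})"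
  shows "\<not> computable_fs \<phi> \<and> \<not> stationary \<phi>"
proof -
  obtain N k0 :: nat where K: "0 < k0 + 1" "k0 + 5 < N" "p < real (k0 + 1) / real N" "real (k0 + 5) / real N < q"
    by (rule consts_exist[OF assms(3-5)])
  have Npos: "real N > 0" using K by simp
  have ks: "0 < k0 + 1" "k0 + 1 < k0 + 2" "k0 + 2 < k0 + 4" "k0 + 4 < k0 + 5" "k0 + 5 < N"
    using K by auto
  have notcomp: "\<not> computable_fs \<phi>"
  proof
    assume "computable_fs \<phi>"
    then obtain q0 where q0: "recursive_rat2 enc_sit q0" "\<forall>d n. \<bar>lower_fs \<phi> d - q0 d n\<bar> < 2 powr (- real n)"
      by (auto simp: computable_fs_def computable_real_def)
    then obtain A B C where ABC: "recfn 2 A" "recfn 2 B" "recfn 2 C"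
      "\<forall>d n. q0 d n = rat_code (A [enc_sit d, n]) (B [enc_sit d, n]) (C [enc_sit d, n])"
      by (auto simp: recursive_rat2_def)
    define CS where "CS e = (if A [e, N] * N \<le> (k0 + 3) * (C [e, N] + 1) + B [e, N] * N then 1 else (0::nat))" for e
    have cA: "cfn 1 (\<lambda>xs. A [xs ! 0, N])" by (intro cfn_comp2[OF recfn_cfn[OF ABC(1)]] cfn_proj cfn_const) auto
    have cB: "cfn 1 (\<lambda>xs. B [xs ! 0, N])" by (intro cfn_comp2[OF recfn_cfn[OF ABC(2)]] cfn_proj cfn_const) auto
    have cC: "cfn 1 (\<lambda>xs. C [xs ! 0, N])" by (intro cfn_comp2[OF recfn_cfn[OF ABC(3)]] cfn_proj cfn_const) auto
    have cCS: "cfn 1 (\<lambda>xs. CS (xs ! 0))"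
      unfolding CS_def by (intro cfn_if_le cfn_mult cfn_add cfn_const cA cB cC)
    have pw: "2 powr (- real N) \<le> 1 / real N"
    proof -
      have "real N < real (2 ^ N)" by (simp only: of_nat_less_iff less_exp)
      then have "real N < 2 ^ N" by simp
      then have "real N \<le> 2 powr real N" by (simp add: powr_realpow)
      then show ?thesis using Npos by (simp add: powr_minus field_simps)
    qed
    have CSp: "\<forall>s. (CS (enc_sit s) \<noteq> 0 \<longrightarrow> lower_fs \<phi> s \<le> real (k0 + 4) / real N) \<and>
                   (CS (enc_sit s) = 0 \<longrightarrow> real (k0 + 2) / real N \<le> lower_fs \<phi> s)"
    proof (intro allI conjI impI)
      fix s
      define a where "a = real (A [enc_sit s, N])"
      define b where "b = real (B [enc_sit s, N])"
      define c where "c = real (C [enc_sit s, N])"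
      have c0: "c + 1 > 0" by (simp add: c_def)
      have qv: "q0 s N = (a - b) / (c + 1)" using ABC(4) by (simp add: rat_code_def a_def b_def c_def)
      have close: "\<bar>lower_fs \<phi> s - (a - b) / (c + 1)\<bar> < 1 / real N"
        using q0(2)[rule_format, of s N] pw qv by simp
      have sum1: "real (k0 + 3) / real N + 1 / real N = real (k0 + 4) / real N"
        using Npos by (simp add: field_simps)
      have sum2: "real (k0 + 3) / real N - 1 / real N = real (k0 + 2) / real N"
        using Npos by (simp add: field_simps)
      have cl: "lower_fs \<phi> s < (a - b) / (c + 1) + 1 / real N" "(a - b) / (c + 1) - 1 / real N < lower_fs \<phi> s"
        using close by (simp_all add: abs_less_iff)
      {
        assume "CS (enc_sit s) \<noteq> 0"
        then have "A [enc_sit s, N] * N \<le> (k0 + 3) * (C [enc_sit s, N] + 1) + B [enc_sit s, N] * N"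
          by (simp add: CS_def split: if_splits)
        then have "real (A [enc_sit s, N] * N) \<le> real ((k0 + 3) * (C [enc_sit s, N] + 1) + B [enc_sit s, N] * N)"
          by (simp only: of_nat_le_iff)
        then have "a * real N \<le> real (k0 + 3) * (c + 1) + b * real N"
          by (simp add: a_def b_def c_def algebra_simps)
        then have "(a - b) * real N \<le> real (k0 + 3) * (c + 1)" by (simp add: algebra_simps)
        then have "(a - b) / (c + 1) \<le> real (k0 + 3) / real N" using c0 Npos by (simp add: field_simps)
        then show "lower_fs \<phi> s \<le> real (k0 + 4) / real N" using cl(1) sum1 by linarith
      }
      {
        assume "CS (enc_sit s) = 0"
        then have "\<not> A [enc_sit s, N] * N \<le> (k0 + 3) * (C [enc_sit s, N] + 1) + B [enc_sit s, N] * N"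
          by (simp add: CS_def split: if_splits)
        then have "\<not> real (A [enc_sit s, N] * N) \<le> real ((k0 + 3) * (C [enc_sit s, N] + 1) + B [enc_sit s, N] * N)"
          by (metis of_nat_le_iff)
        then have "\<not> a * real N \<le> real (k0 + 3) * (c + 1) + b * real N"
          by (simp add: a_def b_def c_def algebra_simps)
        then have "real (k0 + 3) * (c + 1) < (a - b) * real N" by (simp add: algebra_simps)
        then have "real (k0 + 3) / real N < (a - b) / (c + 1)" using c0 Npos by (simp add: field_simps)
        then show "real (k0 + 2) / real N \<le> lower_fs \<phi> s" using cl(2) sum2 by linarith
      }
    qed
    interpret cset \<phi> p q R CS "k0 + 1" "k0 + 2" "k0 + 4" "k0 + 5" N
      by unfold_locales (use assms ks K cCS CSp in auto)
    show False by (rule contradiction)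
  qed
  have notstat: "\<not> stationary \<phi>"
  proof
    assume "stationary \<phi>"
    then obtain I where I: "\<forall>s. \<phi> s = I" by (auto simp: stationary_def)
    obtain r where r: "\<phi> [] = {r}" using assms(2) by (auto simp: precise_def)
    have lr: "lower_fs \<phi> s = r" for s using I r by (simp add: lower_fs_def)
    define c0 :: nat where "c0 = (if r \<le> real (k0 + 3) / real N then 1 else 0)"
    define CS where "CS e = c0" for e :: nat
    have cCS: "cfn 1 (\<lambda>xs. CS (xs ! 0))" unfolding CS_def by (rule cfn_const)
    have CSp: "\<forall>s. (CS (enc_sit s) \<noteq> 0 \<longrightarrow> lower_fs \<phi> s \<le> real (k0 + 4) / real N) \<and>
                   (CS (enc_sit s) = 0 \<longrightarrow> real (k0 + 2) / real N \<le> lower_fs \<phi> s)"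
      using Npos by (auto simp: CS_def c0_def lr field_simps split: if_splits)
    interpret cset \<phi> p q R CS "k0 + 1" "k0 + 2" "k0 + 4" "k0 + 5" N
      by unfold_locales (use assms ks K cCS CSp in auto)
    show False by (rule contradiction)
  qed
  show ?thesis using notcomp notstat by blast
qed

end
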